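(* Let $\mathcal{T}$ be an MPQ-tree of an interval graph $G=(V,E)$, let $(x,y)\in E$ with $x$ over $y$ and $node(x)\neq node(y)$. If $node(y)$ is a Q-node, then $(x,y)$ is not an interval edge.
   Context: Graphs are finite and simple; for $G=(V,E)$ and $e\in E$, $G-e=(V,E\setminus\{e\})$. An edge $(x,y)\in E$ of an interval graph $G$ is an interval edge if $G-(x,y)$ is an interval graph. An MPQ-tree of an interval graph $G=(V,E)$, $V=\{1,\dots,n\}$, is a rooted plane tree whose nodes are P-nodes and Q-nodes. Each P-node carries a (possibly empty) set of vertices. A Q-node has $k\ge 3$ ordered positions $1,\dots,k$; position $i$ carries a set $S_i\subseteq V$ (the $i$-th section) and a child subtree $T_i$, which may be empty. Every vertex $v$ is assigned to exactly one node $node(v)$: either $v$ lies in the set of the P-node $node(v)$, or $node(v)$ is a Q-node and $v$ lies exactly in the sections $S_{l(v)},\dots,S_{r(v)}$ of it, with $l(v)<r(v)$. For a node with child subtrees $T_1,\dots,T_k$, $V_i$ denotes the set of vertices assigned to nodes of $T_i$ ($V_i=\emptyset$ if $T_i$ is empty). The maximal cliques of $G$ are in bijection with the descending paths from the root which at a P-node continue into one of its children (stopping if there is none) and at a Q-node choose a position $i$ and continue into $T_i$ (stopping if $T_i$ is empty); the clique is the union of the sets of the visited P-nodes and the chosen sections. Reading these cliques left to right gives a linear order of the maximal cliques, and the orders obtained this way after arbitrarily permuting children of P-nodes and reversing the positions of Q-nodes are exactly the orders of the maximal cliques of $G$ in which the cliques containing any fixed vertex are consecutive. Moreover, for every Q-node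 with sections $S_1,\dots,S_k$: (a) $V_1\neq\emptyset$ and $V_k\ne\emptyset$; (b) $S_1\subseteq S_2$ and $S_k\subseteq S_{k-1}$; (c) $S_{i-1}\cap S_i\neq\emptyset$ for $2\le i\le k$; (d) $S_{i-1}\neq S_i$ for $2\le i\le k$; (e) $(S_i\cap S_{i+1})\setminus S_1\neq\emptyset$ and $(S_{i-1}\cap S_i)\setminus S_k\neq\emptyset$ for $2\le i\le k-1$; (f) $(S_{i-1}\cup V_{i-1})\setminus S_i\neq\emptyset$ and $(S_i\cup V_i)\setminus S_{i-1}\neq\emptyset$ for $2\le i\le k$; and further (g) no empty P-node has an empty P-node as its parent, (h) no P-node has exactly one child whose root is a P-node, (i) every child subtree of a P-node is nonempty. We say $x$ is over $y$ if $node(x)$ is the lowest common ancestor of $node(x)$ and $node(y)$ in $\mathcal{T}$. *)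

theory Defs
  imports Complex_Main "HOL-Library.Sublist" "HOL-Library.Multiset"
begin

definition simple_graph :: "'v set \<Rightarrow> 'v set set \<Rightarrow> bool" where
  "simple_graph V E \<longleftrightarrow> finite V \<and>
     (\<forall>e\<in>E. \<exists>u v. e = {u, v} \<and> u \<noteq> v \<and> u \<in> V \<and> v \<in> V)"

definition interval_graph :: "'v set \<Rightarrow> 'v set set \<Rightarrow> bool" where
  "interval_graph V E \<longleftrightarrow> simple_graph V E \<and>
     (\<exists>l r :: 'v \<Rightarrow> real. (\<forall>v\<in>V. l v \<le> r v) \<and>
        (\<forall>u\<in>V. \<forall>v\<in>V. u \<noteq> v \<longrightarrow>
            ({u, v} \<in> E \<longleftrightarrow> max (l u) (l v) \<le> min (r u) (r v))))"

definition interval_edge :: "'v set \<Rightarrow> 'v set set \<Rightarrow> 'v set \<Rightarrow> bool" where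
  "interval_edge V E e \<longleftrightarrow> e \<in> E \<and> interval_graph V (E - {e})"

definition is_clique :: "'v set \<Rightarrow> 'v set set \<Rightarrow> 'v set \<Rightarrow> bool" where
  "is_clique V E C \<longleftrightarrow> C \<subseteq> V \<and> (\<forall>u\<in>C. \<forall>v\<in>C. u \<noteq> v \<longrightarrow> {u, v} \<in> E)"

definition max_cliques :: "'v set \<Rightarrow> 'v set set \<Rightarrow> 'v set set" where
  "max_cliques V E = {C. is_clique V E C \<and> (\<forall>D. is_clique V E D \<and> C \<subseteq> D \<longrightarrow> D = C)}"

text \<open>A Q-node carries the list of its positions; position i carries the section S_i and
a child subtree T_i, which may be empty (None).  Positions are indexed 0,...,k-1.\<close>

datatype 'v mpq = PNode "'v set" "'v mpq list" | QNode "('v set \<times> 'v mpq option) list"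

text \<open>Nodes of a tree are addressed by paths from the root (lists of child indices).\<close>

inductive at_path :: "'v mpq \<Rightarrow> nat list \<Rightarrow> 'v mpq \<Rightarrow> bool" where
  root: "at_path t [] t"
| pchild: "i < length cs \<Longrightarrow> at_path (cs ! i) p s \<Longrightarrow> at_path (PNode S cs) (i # p) s"
| qchild: "i < length qs \<Longrightarrow> snd (qs ! i) = Some c \<Longrightarrow> at_path c p s
            \<Longrightarrow> at_path (QNode qs) (i # p) s"

definition node_label :: "'v mpq \<Rightarrow> 'v set" where
  "node_label t = (case t of PNode S cs \<Rightarrow> S | QNode qs \<Rightarrow> \<Union> (fst ` set qs))"

definition tverts :: "'v mpq \<Rightarrow> 'v set" where
  "tverts t = \<Union> {node_label s | p s. at_path t p s}"

definition sub_verts :: "'v mpq option \<Rightarrow> 'v set" where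
  "sub_verts c = (case c of None \<Rightarrow> {} | Some t \<Rightarrow> tverts t)"

definition vnode :: "'v mpq \<Rightarrow> 'v \<Rightarrow> nat list \<Rightarrow> bool" where
  "vnode T v p \<longleftrightarrow> (\<exists>s. at_path T p s \<and> v \<in> node_label s)"

function cliques :: "'v mpq \<Rightarrow> 'v set list" where
  "cliques (PNode S cs) =
     (if cs = [] then [S] else map ((\<union>) S) (concat (map cliques cs)))"
| "cliques (QNode qs) =
     concat (map (\<lambda>p. case snd p of None \<Rightarrow> [fst p]
                                   | Some t \<Rightarrow> map ((\<union>) (fst p)) (cliques t)) qs)"
  by pat_completeness auto
termination
proof (relation "measure size", goal_cases)
  case 1 then show ?case by simp
next
  case (2 S cs x) then show ?case by (simp add: less_Suc_eq_le size_list_estimation')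
next
  case (3 qs x t)
  then obtain a where "(a, Some t) \<in> set qs" by (metis prod.collapse)
  then have "size_prod (\<lambda>_. 0) (size_option size) (a, Some t) \<le> size_list (size_prod (\<lambda>_. 0) (size_option size)) qs"
    by (rule size_list_estimation') simp
  then show ?case by simp
qed

inductive reorder :: "'v mpq \<Rightarrow> 'v mpq \<Rightarrow> bool" where
  P: "list_all2 reorder cs ds \<Longrightarrow> mset es = mset ds \<Longrightarrow> reorder (PNode S cs) (PNode S es)"
| Q: "list_all2 (\<lambda>a b. fst a = fst b \<and> rel_option reorder (snd a) (snd b)) qs rs
      \<Longrightarrow> qs' = rs \<or> qs' = rev rs \<Longrightarrow> reorder (QNode qs) (QNode qs')"
monos list.rel_mono option.rel_mono

definition consecutive_for :: "'v set list \<Rightarrow> 'v \<Rightarrow> bool" where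
  "consecutive_for L v \<longleftrightarrow>
     (\<forall>i j k. i \<le> j \<and> j \<le> k \<and> k < length L \<and> v \<in> L ! i \<and> v \<in> L ! k \<longrightarrow> v \<in> L ! j)"

text \<open>Conditions (a)-(f) on a Q-node (0-based positions 0..k-1), and k >= 3.\<close>

definition qnode_ok :: "('v set \<times> 'v mpq option) list \<Rightarrow> bool" where
  "qnode_ok qs \<longleftrightarrow>
    (let k = length qs; S = (\<lambda>i. fst (qs ! i)); W = (\<lambda>i. sub_verts (snd (qs ! i))) in
      k \<ge> 3 \<and>
      W 0 \<noteq> {} \<and> W (k - 1) \<noteq> {} \<and>
      S 0 \<subseteq> S 1 \<and> S (k - 1) \<subseteq> S (k - 2) \<and>
      (\<forall>i. 1 \<le> i \<and> i \<le> k - 1 \<longrightarrow> S (i - 1) \<inter> S i \<noteq> {}) \<and>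
      (\<forall>i. 1 \<le> i \<and> i \<le> k - 1 \<longrightarrow> S (i - 1) \<noteq> S i) \<and>
      (\<forall>i. 1 \<le> i \<and> i \<le> k - 2 \<longrightarrow>
           (S i \<inter> S (i + 1)) - S 0 \<noteq> {} \<and> (S (i - 1) \<inter> S i) - S (k - 1) \<noteq> {}) \<and>
      (\<forall>i. 1 \<le> i \<and> i \<le> k - 1 \<longrightarrow>
           (S (i - 1) \<union> W (i - 1)) - S i \<noteq> {} \<and> (S i \<union> W i) - S (i - 1) \<noteq> {}))"

definition mpq_tree_of :: "'v set \<Rightarrow> 'v set set \<Rightarrow> 'v mpq \<Rightarrow> bool" where
  "mpq_tree_of V E T \<longleftrightarrow>
     \<comment> \<open>vertex sets of nodes consist of vertices of G\<close>
     (\<forall>p s. at_path T p s \<longrightarrow> node_label s \<subseteq> V) \<and>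
     \<comment> \<open>every vertex is assigned to exactly one node\<close>
     (\<forall>v\<in>V. \<exists>!p. vnode T v p) \<and>
     \<comment> \<open>in a Q-node, a vertex lies exactly in sections l(v)..r(v) with l(v) < r(v)\<close>
     (\<forall>p qs v. at_path T p (QNode qs) \<and> v \<in> node_label (QNode qs) \<longrightarrow>
        (\<exists>l r. l < r \<and> r < length qs \<and>
           (\<forall>i < length qs. v \<in> fst (qs ! i) \<longleftrightarrow> l \<le> i \<and> i \<le> r))) \<and>
     \<comment> \<open>maximal cliques are in bijection with the descending paths\<close>
     distinct (cliques T) \<and> set (cliques T) = max_cliques V E \<and>
     \<comment> \<open>the clique orders of the reordered trees are exactly the consecutive orders\<close>
     {cliques T' | T'. reorder T T'} =
       {L. distinct L \<and> set L = max_cliques V E \<and> (\<forall>v. consecutive_for L v)} \<and>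
     \<comment> \<open>(a)-(f) for every Q-node\<close>
     (\<forall>p qs. at_path T p (QNode qs) \<longrightarrow> qnode_ok qs) \<and>
     \<comment> \<open>(g) no empty P-node has an empty P-node as parent\<close>
     (\<forall>p cs i ds. at_path T p (PNode {} cs) \<and> i < length cs \<and> cs ! i = PNode {} ds \<longrightarrow> False) \<and>
     \<comment> \<open>(h) no P-node has exactly one child whose root is a P-node\<close>
     (\<forall>p S c. at_path T p (PNode S [c]) \<longrightarrow> (\<forall>S' ds. c \<noteq> PNode S' ds))"
     \<comment> \<open>(i) holds by construction: children of P-nodes are (nonempty) trees\<close>

end

theory Submission
  imports Defs
begin
lemma bex_set_nth: "(\<exists>c\<in>set cs. P c) \<longleftrightarrow> (\<exists>j<length cs. P (cs!j))"
  by (metis in_set_conv_nth)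
lemma cliques_P_iff:
  "C \<in> set (cliques (PNode S cs)) \<longleftrightarrow> (cs = [] \<and> C = S) \<or> (\<exists>j<length cs. \<exists>C1 \<in> set (cliques (cs!j)). C = S \<union> C1)"
proof -
  have "C \<in> set (cliques (PNode S cs)) \<longleftrightarrow> (cs = [] \<and> C = S) \<or> (cs \<noteq> [] \<and> (\<exists>c\<in>set cs. \<exists>C1 \<in> set (cliques c). C = S \<union> C1))"
    by auto
  also have "\<dots> \<longleftrightarrow> (cs = [] \<and> C = S) \<or> (\<exists>j<length cs. \<exists>C1 \<in> set (cliques (cs!j)). C = S \<union> C1)"
    unfolding bex_set_nth by auto
  finally show ?thesis .
qed
lemma cliques_Q_iff:
  "C \<in> set (cliques (QNode qs)) \<longleftrightarrow> (\<exists>j<length qs. (snd (qs!j) = None \<and> C = fst (qs!j)) \<or> (\<exists>t. snd (qs!j) = Some t \<and> (\<exists>C1 \<in> set (cliques t). C = fst (qs!j) \<union> C1)))"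
proof -
  have "C \<in> set (cliques (QNode qs)) \<longleftrightarrow> (\<exists>p\<in>set qs. (snd p = None \<and> C = fst p) \<or> (\<exists>t. snd p = Some t \<and> (\<exists>C1 \<in> set (cliques t). C = fst p \<union> C1)))"
  proof -
    have e: "\<And>p. C \<in> set (case snd p of None \<Rightarrow> [fst p] | Some t \<Rightarrow> map ((\<union>) (fst p)) (cliques t)) \<longleftrightarrow>
       (snd p = None \<and> C = fst p) \<or> (\<exists>t. snd p = Some t \<and> (\<exists>C1 \<in> set (cliques t). C = fst p \<union> C1))"
      by (case_tac "snd p") auto
    show ?thesis by (simp only: cliques.simps set_concat set_map) (simp add: e)
  qed
  then show ?thesis unfolding bex_set_nth .
qed

lemma at_path_append: "at_path T p s \<Longrightarrow> at_path s q u \<Longrightarrow> at_path T (p@q) u"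
  by (induction rule: at_path.induct) (auto intro: at_path.intros)

inductive_simps at_path_Nil: "at_path t [] s"
inductive_simps at_path_P: "at_path (PNode S cs) (i#p) s"
inductive_simps at_path_Q: "at_path (QNode qs) (i#p) s"

lemma at_path_fun: "at_path T p s \<Longrightarrow> at_path T p s' \<Longrightarrow> s' = s"
proof (induction p arbitrary: T)
  case Nil then show ?case by (simp add: at_path_Nil)
next
  case (Cons i p) then show ?case by (cases T) (auto simp: at_path_P at_path_Q)
qed

lemma label_tverts: "node_label t \<subseteq> tverts t"
  unfolding tverts_def by (auto intro: at_path.root)

lemma tverts_E: "v \<in> tverts t \<Longrightarrow> \<exists>q u. at_path t q u \<and> v \<in> node_label u"
  unfolding tverts_def by auto

lemma tverts_P: "i < length cs \<Longrightarrow> v \<in> tverts (cs!i) \<Longrightarrow> \<exists>q u. at_path (PNode S cs) (i#q) u \<and> v \<in> node_label u"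
  by (meson at_path.pchild tverts_E)

lemma tverts_Q: "i < length qs \<Longrightarrow> snd (qs!i) = Some c \<Longrightarrow> v \<in> tverts c \<Longrightarrow> \<exists>q u. at_path (QNode qs) (i#q) u \<and> v \<in> node_label u"
  by (meson at_path.qchild tverts_E)

lemma tverts_I: "at_path t q u \<Longrightarrow> v \<in> node_label u \<Longrightarrow> v \<in> tverts t"
  unfolding tverts_def by auto

lemma cliques_tverts: "C \<in> set (cliques t) \<Longrightarrow> C \<subseteq> tverts t"
proof (induction t arbitrary: C rule: cliques.induct)
  case (1 S cs)
  have S: "S \<subseteq> tverts (PNode S cs)" using label_tverts[of "PNode S cs"] by (simp add: node_label_def)
  from "1.prems" show ?case unfolding cliques_P_iff
  proof (elim disjE exE conjE bexE)
    fix j C1 assume j: "j < length cs" "C1 \<in> set (cliques (cs!j))" "C = S \<union> C1"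
    have ne: "cs \<noteq> []" using j(1) by auto
    have "C1 \<subseteq> tverts (cs!j)" using "1.IH"[OF ne nth_mem[OF j(1)] j(2)] .
    also have "\<dots> \<subseteq> tverts (PNode S cs)"
    proof
      fix v assume "v \<in> tverts (cs!j)"
      then obtain q u where "at_path (PNode S cs) (j#q) u" "v \<in> node_label u" using tverts_P[OF j(1)] by blast
      then show "v \<in> tverts (PNode S cs)" by (rule tverts_I)
    qed
    finally show ?thesis using S j by auto
  qed (use S in auto)
next
  case (2 qs)
  have S: "\<And>j. j < length qs \<Longrightarrow> fst (qs!j) \<subseteq> tverts (QNode qs)"
    using label_tverts[of "QNode qs"] by (force simp: node_label_def)
  from "2.prems" show ?case unfolding cliques_Q_iff
  proof (elim disjE exE conjE bexE)
    fix j t C1 assume j: "j < length qs" "snd (qs!j) = Some t" "C1 \<in> set (cliques t)" "C = fst (qs!j) \<union> C1"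
    have "C1 \<subseteq> tverts t" using "2.IH"[OF nth_mem[OF j(1)] j(2) j(3)] .
    also have "\<dots> \<subseteq> tverts (QNode qs)"
    proof
      fix v assume "v \<in> tverts t"
      then obtain q u where "at_path (QNode qs) (j#q) u" "v \<in> node_label u" using tverts_Q[OF j(1,2)] by blast
      then show "v \<in> tverts (QNode qs)" by (rule tverts_I)
    qed
    finally show ?thesis using S j by auto
  qed (use S in auto)
qed


definition outs :: "'v mpq \<Rightarrow> nat list \<Rightarrow> 'v set" where
  "outs T p = {v. \<exists>q u. at_path T q u \<and> \<not> prefix p q \<and> v \<in> node_label u}"

lemma outs_root: "node_label T \<subseteq> outs T (i#p)"
  unfolding outs_def using at_path.root by fastforce

lemma outs_P: "i < length cs \<Longrightarrow> outs (cs!i) p \<subseteq> outs (PNode S cs) (i#p)"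
proof
  fix v assume i: "i < length cs" and "v \<in> outs (cs!i) p"
  then obtain q u where "at_path (cs!i) q u" "\<not> prefix p q" "v \<in> node_label u" unfolding outs_def by blast
  then have "at_path (PNode S cs) (i#q) u" "\<not> prefix (i#p) (i#q)" "v \<in> node_label u"
    using at_path.pchild[OF i] by auto
  then show "v \<in> outs (PNode S cs) (i#p)" unfolding outs_def by blast
qed

lemma outs_Q: "i < length qs \<Longrightarrow> snd (qs!i) = Some c \<Longrightarrow> outs c p \<subseteq> outs (QNode qs) (i#p)"
proof
  fix v assume i: "i < length qs" "snd (qs!i) = Some c" and "v \<in> outs c p"
  then obtain q u where "at_path c q u" "\<not> prefix p q" "v \<in> node_label u" unfolding outs_def by blast
  then have "at_path (QNode qs) (i#q) u" "\<not> prefix (i#p) (i#q)" "v \<in> node_label u"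
    using at_path.qchild[OF i(1,2)] by auto
  then show "v \<in> outs (QNode qs) (i#p)" unfolding outs_def by blast
qed

lemma outs_P_other: "j < length cs \<Longrightarrow> j \<noteq> i \<Longrightarrow> tverts (cs!j) \<subseteq> outs (PNode S cs) (i#p)"
proof
  fix v assume j: "j < length cs" "j \<noteq> i" and v: "v \<in> tverts (cs!j)"
  obtain q u where "at_path (PNode S cs) (j#q) u" "v \<in> node_label u" using tverts_P[OF j(1) v] by blast
  moreover have "\<not> prefix (i#p) (j#q)" using j by simp
  ultimately show "v \<in> outs (PNode S cs) (i#p)" unfolding outs_def by (simp only: mem_Collect_eq) blast
qed

lemma outs_Q_other: "j < length qs \<Longrightarrow> snd (qs!j) = Some t \<Longrightarrow> j \<noteq> i \<Longrightarrow> tverts t \<subseteq> outs (QNode qs) (i#p)"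
proof
  fix v assume j: "j < length qs" "snd (qs!j) = Some t" "j \<noteq> i" and v: "v \<in> tverts t"
  obtain q u where "at_path (QNode qs) (j#q) u" "v \<in> node_label u" using tverts_Q[OF j(1,2) v] by blast
  moreover have "\<not> prefix (i#p) (j#q)" using j by simp
  ultimately show "v \<in> outs (QNode qs) (i#p)" unfolding outs_def by (simp only: mem_Collect_eq) blast
qed

lemma L1: "at_path T p s \<Longrightarrow> C \<in> set (cliques T) \<Longrightarrow>
  (\<exists>A. A \<subseteq> outs T p \<and> (\<exists>D \<in> set (cliques s). C = A \<union> D) \<and>
       (\<forall>D' \<in> set (cliques s). A \<union> D' \<in> set (cliques T))) \<or> C \<subseteq> outs T p"
proof (induction arbitrary: C rule: at_path.induct)
  case (root t) show ?case by (rule disjI1, rule exI[of _ "{}"]) (use root in auto)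
next
  case (pchild i cs p s S)
  have S: "S \<subseteq> outs (PNode S cs) (i#p)" using outs_root[of "PNode S cs" i p] by (simp add: node_label_def)
  have cs: "cs \<noteq> []" using pchild.hyps by auto
  from pchild.prems cs obtain j C1 where j: "j < length cs" "C1 \<in> set (cliques (cs!j))" "C = S \<union> C1"
    unfolding cliques_P_iff by blast
  show ?case
  proof (cases "j = i")
    case True
    from pchild.IH[OF j(2)[unfolded True]] show ?thesis
    proof
      assume "\<exists>A. A \<subseteq> outs (cs ! i) p \<and> (\<exists>D\<in>set (cliques s). C1 = A \<union> D) \<and> (\<forall>D'\<in>set (cliques s). A \<union> D' \<in> set (cliques (cs ! i)))"
      then obtain A D where A: "A \<subseteq> outs (cs ! i) p" "D\<in>set (cliques s)" "C1 = A \<union> D"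
        "\<forall>D'\<in>set (cliques s). A \<union> D' \<in> set (cliques (cs ! i))" by blast
      show ?thesis
      proof (rule disjI1, rule exI[of _ "S \<union> A"], intro conjI ballI)
        show "S \<union> A \<subseteq> outs (PNode S cs) (i # p)" using S A(1) outs_P[OF pchild.hyps(1)] by blast
        show "\<exists>D\<in>set (cliques s). C = S \<union> A \<union> D" using A j True by (intro bexI[of _ D]) (auto simp: Un_assoc)
        fix D' assume "D' \<in> set (cliques s)"
        then have "A \<union> D' \<in> set (cliques (cs ! i))" using A by blast
        then show "S \<union> A \<union> D' \<in> set (cliques (PNode S cs))" unfolding cliques_P_iff
          using pchild.hyps(1) by (intro disjI2 exI[of _ i] conjI bexI[of _ "A \<union> D'"]) (auto simp: Un_assoc)
      qed
    next
      assume "C1 \<subseteq> outs (cs ! i) p"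
      then have "C1 \<subseteq> outs (PNode S cs) (i#p)" using outs_P[OF pchild.hyps(1)] by (rule order_trans)
      then show ?thesis using S j(3) by simp
    qed
  next
    case False
    have "C1 \<subseteq> outs (PNode S cs) (i#p)" using cliques_tverts[OF j(2)] outs_P_other[OF j(1) False] by blast
    then show ?thesis using S j(3) by simp
  qed
next
  case (qchild i qs c p s)
  have S: "\<And>j. j < length qs \<Longrightarrow> fst (qs!j) \<subseteq> outs (QNode qs) (i#p)"
    using outs_root[of "QNode qs" i p] by (force simp: node_label_def)
  from qchild.prems obtain j where j: "j < length qs" and
    jc: "(snd (qs!j) = None \<and> C = fst (qs!j)) \<or> (\<exists>t. snd (qs!j) = Some t \<and> (\<exists>C1 \<in> set (cliques t). C = fst (qs!j) \<union> C1))"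
    unfolding cliques_Q_iff by blast
  from jc show ?case
  proof (elim disjE exE conjE bexE)
    assume "C = fst (qs!j)" then show ?thesis using S[OF j] by simp
  next
    fix t C1 assume t: "snd (qs!j) = Some t" "C1 \<in> set (cliques t)" "C = fst (qs!j) \<union> C1"
    show ?thesis
    proof (cases "j = i")
      case True
      then have tc: "t = c" using t qchild.hyps by simp
      from qchild.IH[OF t(2)[unfolded tc]] show ?thesis
      proof
        assume "\<exists>A. A \<subseteq> outs c p \<and> (\<exists>D\<in>set (cliques s). C1 = A \<union> D) \<and> (\<forall>D'\<in>set (cliques s). A \<union> D' \<in> set (cliques c))"
        then obtain A D where A: "A \<subseteq> outs c p" "D\<in>set (cliques s)" "C1 = A \<union> D"
          "\<forall>D'\<in>set (cliques s). A \<union> D' \<in> set (cliques c)" by blast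
        show ?thesis
        proof (rule disjI1, rule exI[of _ "fst (qs!i) \<union> A"], intro conjI ballI)
          show "fst (qs!i) \<union> A \<subseteq> outs (QNode qs) (i # p)" using S[OF qchild.hyps(1)] A(1) outs_Q[OF qchild.hyps(1,2)] by blast
          show "\<exists>D\<in>set (cliques s). C = fst (qs!i) \<union> A \<union> D" using A t True by (intro bexI[of _ D]) (auto simp: Un_assoc)
          fix D' assume "D' \<in> set (cliques s)"
          then have "A \<union> D' \<in> set (cliques c)" using A by blast
          then show "fst (qs!i) \<union> A \<union> D' \<in> set (cliques (QNode qs))" unfolding cliques_Q_iff
            using qchild.hyps(1,2) by (intro exI[of _ i] conjI disjI2 exI[of _ c] bexI[of _ "A \<union> D'"]) (auto simp: Un_assoc)
        qed
      next
        assume "C1 \<subseteq> outs c p"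
        then have "C1 \<subseteq> outs (QNode qs) (i#p)" using outs_Q[OF qchild.hyps(1,2)] by (rule order_trans)
        then show ?thesis using S[OF j] t(3) by simp
      qed
    next
      case False
      have "C1 \<subseteq> outs (QNode qs) (i#p)" using cliques_tverts[OF t(2)] outs_Q_other[OF j t(1) False] by blast
      then show ?thesis using S[OF j] t(3) by simp
    qed
  qed
qed

definition Qne :: "'v mpq \<Rightarrow> bool" where
  "Qne t \<longleftrightarrow> (\<forall>q qs. at_path t q (QNode qs) \<longrightarrow> qs \<noteq> [])"

lemma Qne_sub: "at_path T p t \<Longrightarrow> Qne T \<Longrightarrow> Qne t"
  unfolding Qne_def using at_path_append by blast

lemma ne_cliques: "Qne t \<Longrightarrow> \<exists>C. C \<in> set (cliques t)"
proof (induction t rule: cliques.induct)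
  case (1 S cs)
  show ?case
  proof (cases "cs = []")
    case True then show ?thesis by simp
  next
    case False
    then have l: "0 < length cs" by simp
    have "Qne (cs!0)" using Qne_sub[OF at_path.pchild[OF l at_path.root] "1.prems"] .
    then obtain C1 where "C1 \<in> set (cliques (cs!0))" using "1.IH"[OF False nth_mem[OF l]] by blast
    then show ?thesis unfolding cliques_P_iff using l by blast
  qed
next
  case (2 qs)
  have "qs \<noteq> []" using "2.prems" at_path.root unfolding Qne_def by blast
  then have l: "0 < length qs" by simp
  show ?case
  proof (cases "snd (qs!0)")
    case None then show ?thesis unfolding cliques_Q_iff using l by blast
  next
    case (Some t)
    have "Qne t" using Qne_sub[OF at_path.qchild[OF l Some at_path.root] "2.prems"] .
    then obtain C1 where "C1 \<in> set (cliques t)" using "2.IH"[OF nth_mem[OF l] Some] by blast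
    then show ?thesis unfolding cliques_Q_iff using l Some by blast
  qed
qed

lemma mem_clique: "at_path t q u \<Longrightarrow> v \<in> node_label u \<Longrightarrow> Qne t \<Longrightarrow> \<exists>C \<in> set (cliques t). v \<in> C"
proof (induction rule: at_path.induct)
  case (root t)
  show ?case
  proof (cases t)
    case (PNode S cs)
    show ?thesis
    proof (cases "cs = []")
      case True then show ?thesis using root PNode by (simp add: node_label_def)
    next
      case False
      then have l: "0 < length cs" by simp
      have "Qne (cs!0)" using Qne_sub[OF at_path.pchild[OF l at_path.root]] root PNode by blast
      then obtain C1 where "C1 \<in> set (cliques (cs!0))" using ne_cliques by blast
      then have "S \<union> C1 \<in> set (cliques t)" unfolding PNode cliques_P_iff using l by blast
      moreover have "v \<in> S \<union> C1" using root PNode by (simp add: node_label_def)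
      ultimately show ?thesis by blast
    qed
  next
    case (QNode qs)
    then obtain j where j: "j < length qs" "v \<in> fst (qs!j)" using root by (auto simp: node_label_def in_set_conv_nth)
    show ?thesis
    proof (cases "snd (qs!j)")
      case None
      then have "fst (qs!j) \<in> set (cliques t)" unfolding QNode cliques_Q_iff using j by blast
      then show ?thesis using j by blast
    next
      case (Some c)
      have "Qne c" using Qne_sub[OF at_path.qchild[OF j(1) Some at_path.root]] root QNode by blast
      then obtain C1 where "C1 \<in> set (cliques c)" using ne_cliques by blast
      then have "fst (qs!j) \<union> C1 \<in> set (cliques t)" unfolding QNode cliques_Q_iff using j Some by blast
      then show ?thesis using j by blast
    qed
  qed
next
  case (pchild i cs p s S)
  have "Qne (cs!i)" using Qne_sub[OF at_path.pchild[OF pchild.hyps(1) at_path.root] pchild.prems(2)] .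
  then obtain C1 where "C1 \<in> set (cliques (cs!i))" "v \<in> C1" using pchild.IH pchild.prems(1) by blast
  then have "S \<union> C1 \<in> set (cliques (PNode S cs))" "v \<in> S \<union> C1" unfolding cliques_P_iff using pchild.hyps(1) by blast+
  then show ?case by blast
next
  case (qchild i qs c p s)
  have "Qne c" using Qne_sub[OF at_path.qchild[OF qchild.hyps(1,2) at_path.root] qchild.prems(2)] .
  then obtain C1 where "C1 \<in> set (cliques c)" "v \<in> C1" using qchild.IH qchild.prems(1) by blast
  then have "fst (qs!i) \<union> C1 \<in> set (cliques (QNode qs))" "v \<in> fst (qs!i) \<union> C1" unfolding cliques_Q_iff using qchild.hyps(1,2) by blast+
  then show ?case by blast
qed

lemma max_clique_ext: "finite V \<Longrightarrow> is_clique V E C \<Longrightarrow> \<exists>M\<in>max_cliques V E. C \<subseteq> M"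
proof (induction "card (V - C)" arbitrary: C rule: less_induct)
  case less
  show ?case
  proof (cases "C \<in> max_cliques V E")
    case True then show ?thesis by blast
  next
    case False
    then obtain D where D: "is_clique V E D" "C \<subseteq> D" "D \<noteq> C" using less.prems unfolding max_cliques_def by blast
    have "D \<subseteq> V" "C \<subseteq> V" using D less.prems unfolding is_clique_def by auto
    then have "V - D \<subset> V - C" using D by blast
    then have "card (V - D) < card (V - C)" using less.prems(1) by (meson finite_Diff psubset_card_mono)
    then obtain M where "M \<in> max_cliques V E" "D \<subseteq> M" using less.hyps less.prems(1) D(1) by blast
    then show ?thesis using D by blast
  qed
qed

lemma C4_not_interval:
  fixes lx rx ly ry la ra lb rb :: real
  assumes "lx \<le> rx" "ly \<le> ry" "la \<le> ra" "lb \<le> rb"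
    "\<not> max lx ly \<le> min rx ry" "\<not> max la lb \<le> min ra rb"
    "max lx la \<le> min rx ra" "max ly la \<le> min ry ra"
    "max lx lb \<le> min rx rb" "max ly lb \<le> min ry rb"
  shows False
  using assms unfolding max_def min_def by (auto split: if_splits)

theorem mainTheorem9:
  fixes n :: nat and E :: "nat set set" and T :: "nat mpq"
    and x y :: nat and px py :: "nat list" and qs :: "(nat set \<times> nat mpq option) list"
  assumes "interval_graph {1..n} E"
    and "mpq_tree_of {1..n} E T"
    and "{x, y} \<in> E"
    and "vnode T x px" and "vnode T y py"
    and "strict_prefix px py"
    and "at_path T py (QNode qs)"
  shows "\<not> interval_edge {1..n} E {x, y}"
proof
  assume IE: "interval_edge {1..n} E {x, y}"
  define V where "V = {1..n::nat}"
  define Q where "Q = QNode qs"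
  have atQ: "at_path T py Q" using assms(7) Q_def by simp
  note MT0 = assms(2)[unfolded mpq_tree_of_def V_def[symmetric]]
  have M01: "\<forall>p s. at_path T p s \<longrightarrow> node_label s \<subseteq> V" using MT0 by (elim conjE) assumption
  have M02: "\<forall>v\<in>V. \<exists>!p. vnode T v p" using MT0 by (elim conjE) assumption
  have M03: "\<forall>p qs v. at_path T p (QNode qs) \<and> v \<in> node_label (QNode qs) \<longrightarrow>
        (\<exists>l r. l < r \<and> r < length qs \<and> (\<forall>i < length qs. v \<in> fst (qs ! i) \<longleftrightarrow> l \<le> i \<and> i \<le> r))"
    using MT0 by (elim conjE) assumption
  have M04: "set (cliques T) = max_cliques V E" using MT0 by (elim conjE) assumption
  have M05: "\<forall>p qs. at_path T p (QNode qs) \<longrightarrow> qnode_ok qs" using MT0 by (elim conjE) assumption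
  note M0 = M01 M02 M03 M04 M05
  have M1: "\<And>p u. at_path T p u \<Longrightarrow> node_label u \<subseteq> V" using M0(1) by blast
  have M2: "\<And>v. v \<in> V \<Longrightarrow> \<exists>!p. vnode T v p" using M0(2) by blast
  have M3: "\<And>p qs' v. at_path T p (QNode qs') \<Longrightarrow> v \<in> node_label (QNode qs') \<Longrightarrow>
        (\<exists>l r. l < r \<and> r < length qs' \<and> (\<forall>i < length qs'. v \<in> fst (qs' ! i) \<longleftrightarrow> l \<le> i \<and> i \<le> r))"
    using M0(3) by blast
  have M5: "set (cliques T) = max_cliques V E" using M0(4) .
  have M7: "\<And>p qs'. at_path T p (QNode qs') \<Longrightarrow> qnode_ok qs'" using M0(5) by blast
  have finV: "finite V" unfolding V_def by simp
  have QneT: "Qne T" unfolding Qne_def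
  proof (intro allI impI)
    fix q qs' assume "at_path T q (QNode qs')"
    then have "qnode_ok qs'" by (rule M7)
    then show "qs' \<noteq> []" unfolding qnode_ok_def Let_def by auto
  qed
  have uniq: "\<And>v p p'. v \<in> V \<Longrightarrow> vnode T v p \<Longrightarrow> vnode T v p' \<Longrightarrow> p = p'"
    using M2 by blast
  have vnI: "\<And>v p u. at_path T p u \<Longrightarrow> v \<in> node_label u \<Longrightarrow> vnode T v p"
    unfolding vnode_def by blast
  have vnV: "\<And>v p. vnode T v p \<Longrightarrow> v \<in> V"
    unfolding vnode_def using M1 by blast
  have desc: "\<And>v. v \<in> tverts Q \<Longrightarrow> \<exists>q. vnode T v (py @ q)"
  proof -
    fix v assume v: "v \<in> tverts Q"
    obtain q u where "at_path Q q u" "v \<in> node_label u" using tverts_E[OF v] by blast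
    then show "\<exists>q. vnode T v (py @ q)" using vnI[OF at_path_append[OF atQ]] by blast
  qed
  have descV: "\<And>v. v \<in> tverts Q \<Longrightarrow> v \<in> V" using desc vnV by blast
  have x_nd: "x \<notin> tverts Q"
  proof
    assume "x \<in> tverts Q"
    then obtain q where q: "vnode T x (py @ q)" using desc by blast
    have e: "px = py @ q" using uniq[OF vnV[OF q] assms(4) q] .
    have "length px < length py" using assms(6) by (rule prefix_length_less)
    then show False using e by simp
  qed
  have nouts: "\<And>v. v \<in> tverts Q \<Longrightarrow> v \<notin> outs T py"
  proof
    fix v assume v: "v \<in> tverts Q" and "v \<in> outs T py"
    then obtain q' u where q': "at_path T q' u" "\<not> prefix py q'" "v \<in> node_label u"
      unfolding outs_def by blast
    obtain q where q: "vnode T v (py @ q)" using desc[OF v] by blast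
    have "q' = py @ q" using uniq[OF vnV[OF q] vnI[OF q'(1,3)] q] .
    then show False using q'(2) by simp
  qed
  have yQ: "y \<in> node_label Q"
  proof -
    obtain s where "at_path T py s" "y \<in> node_label s" using assms(5) unfolding vnode_def by blast
    then show ?thesis using at_path_fun[OF atQ] by blast
  qed
  have QT: "node_label Q \<subseteq> tverts Q" by (rule label_tverts)
  have secQ: "\<And>i. i < length qs \<Longrightarrow> fst (qs!i) \<subseteq> node_label Q"
    unfolding Q_def node_label_def by force
  have secvn: "\<And>v i. i < length qs \<Longrightarrow> v \<in> fst (qs!i) \<Longrightarrow> vnode T v py"
    using vnI[OF atQ] secQ by blast
  have subvn: "\<And>v i. i < length qs \<Longrightarrow> v \<in> sub_verts (snd (qs!i)) \<Longrightarrow> \<exists>q. vnode T v (py @ i # q)"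
  proof -
    fix v i assume i: "i < length qs" "v \<in> sub_verts (snd (qs!i))"
    then obtain t where t: "snd (qs!i) = Some t" "v \<in> tverts t" unfolding sub_verts_def by (auto split: option.splits)
    obtain q u where "at_path t q u" "v \<in> node_label u" using tverts_E[OF t(2)] by blast
    moreover have "at_path T (py @ [i]) t" using at_path_append[OF atQ] at_path.qchild[OF i(1) t(1) at_path.root] Q_def by blast
    ultimately show "\<exists>q. vnode T v (py @ i # q)" using vnI[OF at_path_append] by fastforce
  qed
  have subQ: "\<And>v i. i < length qs \<Longrightarrow> v \<in> sub_verts (snd (qs!i)) \<Longrightarrow> v \<in> tverts Q"
  proof -
    fix v i assume i: "i < length qs" "v \<in> sub_verts (snd (qs!i))"
    then obtain t where t: "snd (qs!i) = Some t" "v \<in> tverts t" unfolding sub_verts_def by (auto split: option.splits)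
    obtain q u where "at_path Q (i#q) u" "v \<in> node_label u" using tverts_Q[OF i(1) t(1) t(2)] Q_def by blast
    then show "v \<in> tverts Q" by (rule tverts_I)
  qed
  have cQ_pos: "\<And>D. D \<in> set (cliques Q) \<Longrightarrow> \<exists>i<length qs. D \<subseteq> fst (qs!i) \<union> sub_verts (snd (qs!i))"
  proof -
    fix D assume "D \<in> set (cliques Q)"
    then obtain j where j: "j < length qs" and
      jc: "(snd (qs!j) = None \<and> D = fst (qs!j)) \<or> (\<exists>t. snd (qs!j) = Some t \<and> (\<exists>C1 \<in> set (cliques t). D = fst (qs!j) \<union> C1))"
      unfolding Q_def cliques_Q_iff by blast
    from jc have "D \<subseteq> fst (qs!j) \<union> sub_verts (snd (qs!j))"
    proof (elim disjE exE conjE bexE)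
      fix t C1 assume "snd (qs!j) = Some t" "C1 \<in> set (cliques t)" "D = fst (qs!j) \<union> C1"
      then show ?thesis using cliques_tverts by (auto simp: sub_verts_def)
    qed simp
    then show "\<exists>i<length qs. D \<subseteq> fst (qs!i) \<union> sub_verts (snd (qs!i))" using j by blast
  qed
  have cQ_ex: "\<And>v i. i < length qs \<Longrightarrow> v \<in> fst (qs!i) \<union> sub_verts (snd (qs!i)) \<Longrightarrow>
      \<exists>D \<in> set (cliques Q). fst (qs!i) \<subseteq> D \<and> v \<in> D"
  proof -
    fix v i assume i: "i < length qs" "v \<in> fst (qs!i) \<union> sub_verts (snd (qs!i))"
    show "\<exists>D \<in> set (cliques Q). fst (qs!i) \<subseteq> D \<and> v \<in> D"
    proof (cases "snd (qs!i)")
      case None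
      then have "fst (qs!i) \<in> set (cliques Q)" unfolding Q_def cliques_Q_iff using i by blast
      moreover have "v \<in> fst (qs!i)" using i None by (simp add: sub_verts_def)
      ultimately show ?thesis by blast
    next
      case (Some t)
      have atT: "at_path T (py @ [i]) t" using at_path_append[OF atQ] at_path.qchild[OF i(1) Some at_path.root] Q_def by blast
      have Qt: "Qne t" using Qne_sub[OF atT QneT] .
      obtain C1 where C1: "C1 \<in> set (cliques t)" "v \<in> fst (qs!i) \<or> v \<in> C1"
      proof (cases "v \<in> tverts t")
        case True
        then obtain q u where "at_path t q u" "v \<in> node_label u" using tverts_E[OF True] by blast
        then show ?thesis using mem_clique[OF _ _ Qt] that by blast
      next
        case False
        then have "v \<in> fst (qs!i)" using i Some by (simp add: sub_verts_def)
        then show ?thesis using ne_cliques[OF Qt] that by blast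
      qed
      have "fst (qs!i) \<union> C1 \<in> set (cliques Q)" unfolding Q_def cliques_Q_iff using i Some C1(1) by blast
      then show ?thesis using C1(2) by blast
    qed
  qed
  obtain l r where lr: "l < r" "r < length qs" "\<And>i. i < length qs \<Longrightarrow> y \<in> fst (qs ! i) \<longleftrightarrow> l \<le> i \<and> i \<le> r"
    using M3[OF assms(7)] yQ Q_def by blast
  have yl: "y \<in> fst (qs!l)" and yl1: "y \<in> fst (qs!(l+1))" using lr by auto
  have ok: "qnode_ok qs" using M7[OF assms(7)] .
  have f: "\<forall>i. 1 \<le> i \<and> i \<le> length qs - 1 \<longrightarrow>
           (fst (qs!(i-1)) \<union> sub_verts (snd (qs!(i-1)))) - fst (qs!i) \<noteq> {} \<and>
           (fst (qs!i) \<union> sub_verts (snd (qs!i))) - fst (qs!(i-1)) \<noteq> {}"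
    using ok unfolding qnode_ok_def Let_def by blast
  have f1: "(fst (qs!(l+1-1)) \<union> sub_verts (snd (qs!(l+1-1)))) - fst (qs!(l+1)) \<noteq> {} \<and>
     (fst (qs!(l+1)) \<union> sub_verts (snd (qs!(l+1)))) - fst (qs!(l+1-1)) \<noteq> {}"
    by (rule f[rule_format]) (use lr in simp)
  have f2: "(fst (qs!l) \<union> sub_verts (snd (qs!l))) - fst (qs!(l+1)) \<noteq> {}"
    using f1 unfolding add_diff_cancel_right' by (rule conjunct1)
  have f3: "(fst (qs!(l+1)) \<union> sub_verts (snd (qs!(l+1)))) - fst (qs!l) \<noteq> {}"
    using f1 unfolding add_diff_cancel_right' by (rule conjunct2)
  note f2 = f2 f3
  from f2 obtain a b where
    a: "a \<in> fst (qs!l) \<union> sub_verts (snd (qs!l))" "a \<notin> fst (qs!(l+1))" and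
    b: "b \<in> fst (qs!(l+1)) \<union> sub_verts (snd (qs!(l+1)))" "b \<notin> fst (qs!l)"
    by blast
  have l1: "l + 1 < length qs" "l < length qs" using lr by auto
  have aQ: "a \<in> tverts Q" using a(1) subQ[OF l1(2)] secQ[OF l1(2)] QT by blast
  have bQ: "b \<in> tverts Q" using b(1) subQ[OF l1(1)] secQ[OF l1(1)] QT by blast
  have yQ': "y \<in> tverts Q" using yQ QT by blast
  have apos: "\<And>i. i < length qs \<Longrightarrow> a \<in> fst (qs!i) \<union> sub_verts (snd (qs!i)) \<Longrightarrow> i \<le> l"
  proof -
    fix i assume i: "i < length qs" "a \<in> fst (qs!i) \<union> sub_verts (snd (qs!i))"
    have aV: "a \<in> V" using descV[OF aQ] .
    show "i \<le> l"
    proof (cases "a \<in> fst (qs!l)")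
      case True
      then have vn: "vnode T a py" using secvn[OF l1(2)] by blast
      show ?thesis
      proof (cases "a \<in> fst (qs!i)")
        case True
        have "a \<in> node_label (QNode qs)" using True secQ[OF i(1)] Q_def by blast
        then obtain la ra where r: "la < ra" "ra < length qs" "\<And>j. j < length qs \<Longrightarrow> a \<in> fst (qs ! j) \<longleftrightarrow> la \<le> j \<and> j \<le> ra"
          using M3[OF assms(7)] by blast
        show ?thesis using r(3)[OF i(1)] r(3)[OF l1(2)] r(3)[OF l1(1)] True \<open>a \<in> fst (qs!l)\<close> a(2) by auto
      next
        case False
        then obtain q where "vnode T a (py @ i # q)" using i subvn by blast
        then show ?thesis using uniq[OF aV vn] by auto
      qed
    next
      case False
      then obtain q where q: "vnode T a (py @ l # q)" using a(1) subvn[OF l1(2)] by blast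
      show ?thesis
      proof (cases "a \<in> fst (qs!i)")
        case True
        then show ?thesis using uniq[OF aV q secvn[OF i(1)]] by auto
      next
        case False
        then obtain q' where "vnode T a (py @ i # q')" using i subvn by blast
        then show ?thesis using uniq[OF aV q] by auto
      qed
    qed
  qed
  have bpos: "\<And>i. i < length qs \<Longrightarrow> b \<in> fst (qs!i) \<union> sub_verts (snd (qs!i)) \<Longrightarrow> l + 1 \<le> i"
  proof -
    fix i assume i: "i < length qs" "b \<in> fst (qs!i) \<union> sub_verts (snd (qs!i))"
    have bV: "b \<in> V" using descV[OF bQ] .
    show "l + 1 \<le> i"
    proof (cases "b \<in> fst (qs!(l+1))")
      case True
      then have vn: "vnode T b py" using secvn[OF l1(1)] by blast
      show ?thesis
      proof (cases "b \<in> fst (qs!i)")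
        case True
        have "b \<in> node_label (QNode qs)" using True secQ[OF i(1)] Q_def by blast
        then obtain lb rb where r: "lb < rb" "rb < length qs" "\<And>j. j < length qs \<Longrightarrow> b \<in> fst (qs ! j) \<longleftrightarrow> lb \<le> j \<and> j \<le> rb"
          using M3[OF assms(7)] by blast
        show ?thesis using r(3)[OF i(1)] r(3)[OF l1(2)] r(3)[OF l1(1)] True \<open>b \<in> fst (qs!(l+1))\<close> b(2) by auto
      next
        case False
        then obtain q where "vnode T b (py @ i # q)" using i subvn by blast
        then show ?thesis using uniq[OF bV vn] by auto
      qed
    next
      case False
      then obtain q where q: "vnode T b (py @ (l+1) # q)" using b(1) subvn[OF l1(1)] by blast
      show ?thesis
      proof (cases "b \<in> fst (qs!i)")
        case True
        then show ?thesis using uniq[OF bV q secvn[OF i(1)]] by auto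
      next
        case False
        then obtain q' where "vnode T b (py @ i # q')" using i subvn by blast
        then show ?thesis using uniq[OF bV q] by auto
      qed
    qed
  qed
  have noab: "\<And>C. C \<in> set (cliques T) \<Longrightarrow> a \<in> C \<Longrightarrow> b \<in> C \<Longrightarrow> False"
  proof -
    fix C assume C: "C \<in> set (cliques T)" "a \<in> C" "b \<in> C"
    from L1[OF atQ C(1)] show False
    proof
      assume "\<exists>A. A \<subseteq> outs T py \<and> (\<exists>D \<in> set (cliques Q). C = A \<union> D) \<and> (\<forall>D' \<in> set (cliques Q). A \<union> D' \<in> set (cliques T))"
      then obtain A D where AD: "A \<subseteq> outs T py" "D \<in> set (cliques Q)" "C = A \<union> D" by blast
      have "a \<in> D" "b \<in> D" using AD C nouts[OF aQ] nouts[OF bQ] by auto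
      moreover obtain i where "i < length qs" "D \<subseteq> fst (qs!i) \<union> sub_verts (snd (qs!i))" using cQ_pos[OF AD(2)] by blast
      ultimately show False using apos bpos by fastforce
    next
      assume "C \<subseteq> outs T py" then show False using C(2) nouts[OF aQ] by blast
    qed
  qed
  have xV: "x \<in> V" using vnV[OF assms(4)] .
  have yV: "y \<in> V" using vnV[OF assms(5)] .
  have xy: "x \<noteq> y" using x_nd yQ' by blast
  have "is_clique V E {x, y}" unfolding is_clique_def using xV yV assms(3) by (auto simp: insert_commute)
  then obtain M where M: "M \<in> max_cliques V E" "{x,y} \<subseteq> M" using max_clique_ext[OF finV] by blast
  have MT: "M \<in> set (cliques T)" using M M5 by simp
  obtain A where A: "A \<subseteq> outs T py" "x \<in> A" "\<forall>D' \<in> set (cliques Q). A \<union> D' \<in> set (cliques T)"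
  proof -
    from L1[OF atQ MT] show ?thesis
    proof
      assume "\<exists>A. A \<subseteq> outs T py \<and> (\<exists>D \<in> set (cliques Q). M = A \<union> D) \<and> (\<forall>D' \<in> set (cliques Q). A \<union> D' \<in> set (cliques T))"
      then obtain A D where AD: "A \<subseteq> outs T py" "D \<in> set (cliques Q)" "M = A \<union> D" "\<forall>D' \<in> set (cliques Q). A \<union> D' \<in> set (cliques T)" by blast
      have "x \<notin> D" using cliques_tverts[OF AD(2)] x_nd by blast
      then have "x \<in> A" using M(2) AD(3) by blast
      then show ?thesis using that AD by blast
    next
      assume "M \<subseteq> outs T py" then show ?thesis using M(2) nouts[OF yQ'] by blast
    qed
  qed
  obtain Da where Da: "Da \<in> set (cliques Q)" "fst (qs!l) \<subseteq> Da" "a \<in> Da" using cQ_ex[OF l1(2) a(1)] by blast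
  obtain Db where Db: "Db \<in> set (cliques Q)" "fst (qs!(l+1)) \<subseteq> Db" "b \<in> Db" using cQ_ex[OF l1(1) b(1)] by blast
  have Ca: "A \<union> Da \<in> max_cliques V E" using A(3) Da(1) M5 by blast
  have Cb: "A \<union> Db \<in> max_cliques V E" using A(3) Db(1) M5 by blast
  have Ca': "is_clique V E (A \<union> Da)" using Ca unfolding max_cliques_def by blast
  have Cb': "is_clique V E (A \<union> Db)" using Cb unfolding max_cliques_def by blast
  have xa: "x \<noteq> a" using x_nd aQ by blast
  have xb: "x \<noteq> b" using x_nd bQ by blast
  have ya: "y \<noteq> a" using yl1 a(2) by blast
  have yb: "y \<noteq> b" using yl b(2) by blast
  have ab: "a \<noteq> b" using noab[of "A \<union> Da"] A(3) Da by blast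
  have Exa: "{x,a} \<in> E" using Ca' A(2) Da(3) xa unfolding is_clique_def by blast
  have Eya: "{y,a} \<in> E" using Ca' yl Da(2,3) ya unfolding is_clique_def by blast
  have Exb: "{x,b} \<in> E" using Cb' A(2) Db(3) xb unfolding is_clique_def by blast
  have Eyb: "{y,b} \<in> E" using Cb' yl1 Db(2,3) yb unfolding is_clique_def by blast
  have aV: "a \<in> V" using descV[OF aQ] .
  have bV: "b \<in> V" using descV[OF bQ] .
  have nEab: "{a,b} \<notin> E"
  proof
    assume "{a,b} \<in> E"
    then have "is_clique V E {a, b}" unfolding is_clique_def using aV bV by (auto simp: insert_commute)
    then obtain M' where "M' \<in> max_cliques V E" "{a,b} \<subseteq> M'" using max_clique_ext[OF finV] by blast
    then show False using noab[of M'] M5 by simp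
  qed
  from IE obtain lf rf :: "nat \<Rightarrow> real" where I: "\<forall>v\<in>V. lf v \<le> rf v"
    "\<forall>u\<in>V. \<forall>v\<in>V. u \<noteq> v \<longrightarrow> ({u, v} \<in> E - {{x,y}} \<longleftrightarrow> max (lf u) (lf v) \<le> min (rf u) (rf v))"
    unfolding interval_edge_def interval_graph_def V_def by blast
  have d1: "{x,a} \<noteq> {x,y}" using ya xy by (auto simp: doubleton_eq_iff)
  have d2: "{y,a} \<noteq> {x,y}" using xa ya by (auto simp: doubleton_eq_iff)
  have d3: "{x,b} \<noteq> {x,y}" using yb xy by (auto simp: doubleton_eq_iff)
  have d4: "{y,b} \<noteq> {x,y}" using xb yb by (auto simp: doubleton_eq_iff)
  show False
  proof (rule C4_not_interval)
    show "lf x \<le> rf x" "lf y \<le> rf y" "lf a \<le> rf a" "lf b \<le> rf b" using I(1) xV yV aV bV by auto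
    show "\<not> max (lf x) (lf y) \<le> min (rf x) (rf y)" using I(2) xV yV xy by auto
    show "\<not> max (lf a) (lf b) \<le> min (rf a) (rf b)" using I(2) aV bV ab nEab by auto
    show "max (lf x) (lf a) \<le> min (rf x) (rf a)" using I(2) xV aV xa Exa d1 by auto
    show "max (lf y) (lf a) \<le> min (rf y) (rf a)" using I(2) yV aV ya Eya d2 by auto
    show "max (lf x) (lf b) \<le> min (rf x) (rf b)" using I(2) xV bV xb Exb d3 by auto
    show "max (lf y) (lf b) \<le> min (rf y) (rf b)" using I(2) yV bV yb Eyb d4 by auto
  qed
qed

end
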